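(* Let $p \geq 1$. Let the coordinates of $\mathbb{R}^d$ be partitioned into $L$ groups, so that every $\mathbf{x} \in \mathbb{R}^d$ is written $\mathbf{x} = ({\mathbf{x}^{(1)}}^\top, \ldots, {\mathbf{x}^{(L)}}^\top)^\top$ with $\mathbf{x}^{(\ell)} \in \mathbb{R}^{d_\ell}$ and $\sum_{\ell=1}^L d_\ell = d$, and let $d(\cdot,\cdot)$ be a distance function (metric) applied to each group. For discrete probability measures $\mu = \sum_{i=1}^n a_i \delta_{\mathbf{x}_i}$ and $\nu = \sum_{j=1}^m b_j \delta_{\mathbf{y}_j}$ on $\mathbb{R}^d$ define $$\mathrm{FRWD}_p(\mu,\nu) = \left( \min_{\boldsymbol{\Pi} \in U(\mu,\nu)} \max_{\boldsymbol{\alpha} \in \Sigma^L} \sum_{i=1}^n \sum_{j=1}^m \pi_{ij} \sum_{\ell=1}^L \alpha_\ell\, d(\mathbf{x}_i^{(\ell)}, \mathbf{y}_j^{(\ell)})^p \right)^{1/p}.$$ Then $\mathrm{FRWD}_p$ is a distance (on discrete probability measures on $\mathbb{R}^d$).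
   Context: $U(\mu,\nu) = \{\boldsymbol{\Pi} \in \mathbb{R}_+^{n\times m} : \boldsymbol{\Pi}\mathbf{1}_m = \mathbf{a},\ \boldsymbol{\Pi}^\top \mathbf{1}_n = \mathbf{b}\}$ is the set of transport plans, where $\mathbf{a}=(a_1,\dots,a_n)^\top \in \mathbb{R}_+^n$ and $\mathbf{b}=(b_1,\dots,b_m)^\top\in\mathbb{R}_+^m$ are the weight vectors of $\mu$ and $\nu$. $\Sigma^L = \{\boldsymbol{\alpha} \in \mathbb{R}_+^L : \boldsymbol{\alpha}^\top \mathbf{1}_L = 1\}$ is the probability simplex. "Distance" means symmetric, nonnegative, zero exactly when $\mu=\nu$, and satisfying the triangle inequality. *)

theory Defs
  imports "HOL-Probability.Probability"
begin

text \<open>A point of R^d with coordinates partitioned into L groups of sizes ds 0, ..., ds (L-1)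
  is represented by its list of group blocks: x l is the block x^(l) (a real list of
  length ds l) for l < L, and x l = [] for l >= L (canonical padding).\<close>
definition grouped_points :: "nat \<Rightarrow> (nat \<Rightarrow> nat) \<Rightarrow> (nat \<Rightarrow> real list) set" where
  "grouped_points L ds = {x. (\<forall>l<L. length (x l) = ds l) \<and> (\<forall>l\<ge>L. x l = [])}"

definition is_distance_on :: "'a set \<Rightarrow> ('a \<Rightarrow> 'a \<Rightarrow> real) \<Rightarrow> bool" where
  "is_distance_on S f \<longleftrightarrow>
     (\<forall>x\<in>S. \<forall>y\<in>S. f x y \<ge> 0) \<and>
     (\<forall>x\<in>S. \<forall>y\<in>S. f x y = f y x) \<and>
     (\<forall>x\<in>S. \<forall>y\<in>S. f x y = 0 \<longleftrightarrow> x = y) \<and>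
     (\<forall>x\<in>S. \<forall>y\<in>S. \<forall>z\<in>S. f x z \<le> f x y + f y z)"

definition discrete_measures :: "nat \<Rightarrow> (nat \<Rightarrow> nat) \<Rightarrow> (nat \<Rightarrow> real list) pmf set" where
  "discrete_measures L ds = {\<mu>. finite (set_pmf \<mu>) \<and> set_pmf \<mu> \<subseteq> grouped_points L ds}"

definition transport_plans :: "'a pmf \<Rightarrow> 'b pmf \<Rightarrow> ('a \<times> 'b) pmf set" where
  "transport_plans \<mu> \<nu> = {P. map_pmf fst P = \<mu> \<and> map_pmf snd P = \<nu>}"

definition prob_simplex :: "nat \<Rightarrow> (nat \<Rightarrow> real) set" where
  "prob_simplex L = {\<alpha>. (\<forall>l<L. \<alpha> l \<ge> 0) \<and> (\<Sum>l<L. \<alpha> l) = 1}"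

definition frwd_cost ::
  "nat \<Rightarrow> (real list \<Rightarrow> real list \<Rightarrow> real) \<Rightarrow> real \<Rightarrow>
   ((nat \<Rightarrow> real list) \<times> (nat \<Rightarrow> real list)) pmf \<Rightarrow> (nat \<Rightarrow> real) \<Rightarrow> real" where
  "frwd_cost L d p P \<alpha> =
     (\<Sum>(x, y)\<in>set_pmf P. pmf P (x, y) * (\<Sum>l<L. \<alpha> l * d (x l) (y l) powr p))"

definition FRWD ::
  "nat \<Rightarrow> (real list \<Rightarrow> real list \<Rightarrow> real) \<Rightarrow> real \<Rightarrow>
   (nat \<Rightarrow> real list) pmf \<Rightarrow> (nat \<Rightarrow> real list) pmf \<Rightarrow> real" where
  "FRWD L d p \<mu> \<nu> =
     (INF P\<in>transport_plans \<mu> \<nu>. SUP \<alpha>\<in>prob_simplex L. frwd_cost L d p P \<alpha>) powr (1 / p)"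

end

theory Submission
  imports Defs
begin


definition cst :: "(real list \<Rightarrow> real list \<Rightarrow> real) \<Rightarrow> real \<Rightarrow> nat \<Rightarrow>
   ((nat \<Rightarrow> real list) \<times> (nat \<Rightarrow> real list)) pmf \<Rightarrow> real" where
  "cst d p l P = measure_pmf.expectation P (\<lambda>q. d (fst q l) (snd q l) powr p)"

definition GG where "GG L d p P = (SUP \<alpha>\<in>prob_simplex L. frwd_cost L d p P \<alpha>)"
definition FF where "FF L d p \<mu> \<nu> = (INF P\<in>transport_plans \<mu> \<nu>. GG L d p P)"

lemma cst_nonneg: "cst d p l P \<ge> 0"
  unfolding cst_def by (rule integral_nonneg_AE) auto

lemma cost_eq:
  assumes "finite (set_pmf P)"
  shows "frwd_cost L d p P \<alpha> = (\<Sum>l<L. \<alpha> l * cst d p l P)"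
proof -
  have c: "cst d p l P = (\<Sum>q\<in>set_pmf P. pmf P q * d (fst q l) (snd q l) powr p)" for l
    unfolding cst_def by (subst integral_measure_pmf[OF assms]) auto
  have "frwd_cost L d p P \<alpha> = (\<Sum>q\<in>set_pmf P. \<Sum>l<L. pmf P q * (\<alpha> l * d (fst q l) (snd q l) powr p))"
    unfolding frwd_cost_def by (simp add: split_def sum_distrib_left)
  also have "\<dots> = (\<Sum>l<L. \<Sum>q\<in>set_pmf P. \<alpha> l * (pmf P q * d (fst q l) (snd q l) powr p))"
    by (subst sum.swap) (simp add: algebra_simps)
  also have "\<dots> = (\<Sum>l<L. \<alpha> l * cst d p l P)"
    by (simp add: c sum_distrib_left)
  finally show ?thesis .
qed

lemma simplex_le1: "\<alpha> \<in> prob_simplex L \<Longrightarrow> l < L \<Longrightarrow> \<alpha> l \<le> 1"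
proof -
  assume a: "\<alpha> \<in> prob_simplex L" and l: "l < L"
  have "\<alpha> l \<le> (\<Sum>i<L. \<alpha> i)" by (rule member_le_sum) (use a l in \<open>auto simp: prob_simplex_def\<close>)
  then show ?thesis using a by (simp add: prob_simplex_def)
qed

lemma bdd_G:
  assumes "finite (set_pmf P)"
  shows "bdd_above ((\<lambda>\<alpha>. frwd_cost L d p P \<alpha>) ` prob_simplex L)"
proof (rule bdd_aboveI2)
  fix \<alpha> assume a: "\<alpha> \<in> prob_simplex L"
  have "(\<Sum>l<L. \<alpha> l * cst d p l P) \<le> (\<Sum>l<L. cst d p l P)"
  proof (intro sum_mono)
    fix l assume "l \<in> {..<L}"
    then have "0 \<le> \<alpha> l" "\<alpha> l \<le> 1" using a simplex_le1[OF a] by (auto simp: prob_simplex_def)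
    then show "\<alpha> l * cst d p l P \<le> cst d p l P" using cst_nonneg by (intro mult_left_le_one_le) auto
  qed
  then show "frwd_cost L d p P \<alpha> \<le> (\<Sum>l<L. cst d p l P)" using cost_eq[OF assms] by simp
qed

lemma G_ge:
  assumes "finite (set_pmf P)" "l < L"
  shows "cst d p l P \<le> GG L d p P"
proof -
  define \<alpha> where "\<alpha> = (\<lambda>i. if i = l then 1 else 0::real)"
  have a: "\<alpha> \<in> prob_simplex L" using assms(2) unfolding prob_simplex_def \<alpha>_def by auto
  have "frwd_cost L d p P \<alpha> = cst d p l P"
  proof -
    have "(\<Sum>i<L. \<alpha> i * cst d p i P) = (\<Sum>i<L. if i = l then cst d p i P else 0)"
      by (rule sum.cong) (auto simp: \<alpha>_def)
    then show ?thesis using assms by (simp add: cost_eq)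
  qed
  moreover have "frwd_cost L d p P \<alpha> \<le> GG L d p P"
    unfolding GG_def by (rule cSUP_upper[OF a bdd_G[OF assms(1)]])
  ultimately show ?thesis by simp
qed

lemma G_le:
  assumes "finite (set_pmf P)" "L \<ge> 1" "\<And>l. l < L \<Longrightarrow> cst d p l P \<le> K"
  shows "GG L d p P \<le> K"
  unfolding GG_def
proof (rule cSUP_least)
  have "(\<lambda>i. if i = 0 then 1 else 0::real) \<in> prob_simplex L" using assms(2) unfolding prob_simplex_def by auto
  then show "prob_simplex L \<noteq> {}" by blast
next
  fix \<alpha> assume a: "\<alpha> \<in> prob_simplex L"
  have "(\<Sum>l<L. \<alpha> l * cst d p l P) \<le> (\<Sum>l<L. \<alpha> l * K)"
    using a assms(3) by (intro sum_mono mult_left_mono) (auto simp: prob_simplex_def)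
  also have "\<dots> = K" using a by (simp add: prob_simplex_def flip: sum_distrib_right)
  finally show "frwd_cost L d p P \<alpha> \<le> K" using cost_eq[OF assms(1)] by simp
qed

lemma G_nonneg: "finite (set_pmf P) \<Longrightarrow> L \<ge> 1 \<Longrightarrow> GG L d p P \<ge> 0"
  using G_ge[of P 0 L d p] cst_nonneg[of d p 0 P] by simp

lemma plans_supp:
  assumes "P \<in> transport_plans \<mu> \<nu>"
  shows "set_pmf P \<subseteq> set_pmf \<mu> \<times> set_pmf \<nu>"
proof -
  have "set_pmf \<mu> = fst ` set_pmf P" "set_pmf \<nu> = snd ` set_pmf P"
    using assms unfolding transport_plans_def by (auto simp flip: set_map_pmf)
  then show ?thesis by force
qed

lemma plans_finite:
  "P \<in> transport_plans \<mu> \<nu> \<Longrightarrow> finite (set_pmf \<mu>) \<Longrightarrow> finite (set_pmf \<nu>) \<Longrightarrow> finite (set_pmf P)"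
  by (rule finite_subset[OF plans_supp]) auto

lemma plans_ne: "pair_pmf \<mu> \<nu> \<in> transport_plans \<mu> \<nu>"
  unfolding transport_plans_def by (simp add: map_fst_pair_pmf map_snd_pair_pmf)


lemma mink_pt:
  fixes u v A B p :: real
  assumes u: "u \<ge> 0" and v: "v \<ge> 0" and A: "A > 0" and B: "B > 0" and p: "p \<ge> 1"
  shows "(u+v) powr p \<le> (A+B) powr (p-1) * (u powr p / A powr (p-1) + v powr p / B powr (p-1))"
proof -
  have eA: "A powr p = A powr (p-1) * A" using powr_add[of A "p-1" 1] A by simp
  have eB: "B powr p = B powr (p-1) * B" using powr_add[of B "p-1" 1] B by simp
  have eS: "(A+B) powr p = (A+B) powr (p-1) * (A+B)" using powr_add[of "A+B" "p-1" 1] A B by simp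
  have pA: "A powr (p-1) > 0" "B powr (p-1) > 0" "(A+B) powr (p-1) > 0" using A B by auto
  have mA: "A powr (p-1) \<le> (A+B) powr (p-1)" "B powr (p-1) \<le> (A+B) powr (p-1)"
    using A B p by (auto intro!: powr_mono2)
  show ?thesis
  proof (cases "u = 0")
    case True
    have "v powr p * B powr (p-1) \<le> v powr p * (A+B) powr (p-1)"
      using mA by (intro mult_left_mono) auto
    then show ?thesis using True p pA by (simp add: field_simps)
  next
    case u0: False
    show ?thesis
    proof (cases "v = 0")
      case True
      have "u powr p * A powr (p-1) \<le> u powr p * (A+B) powr (p-1)"
        using mA by (intro mult_left_mono) auto
      then show ?thesis using True p pA by (simp add: field_simps)
    next
      case v0: False
      define t where "t = B / (A+B)"
      have t: "0 \<le> t" "t \<le> 1" "1 - t = A / (A+B)" using A B by (auto simp: t_def field_simps)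
      have "((1-t) *\<^sub>R (u/A) + t *\<^sub>R (v/B)) powr p \<le> (1-t) * (u/A) powr p + t * (v/B) powr p"
        using convex_onD[OF powr_convex[OF p] t(1,2), of "u/A" "v/B"] u v u0 v0 A B by auto
      moreover have "(1-t) *\<^sub>R (u/A) + t *\<^sub>R (v/B) = (u+v)/(A+B)"
      proof -
        have "(1-t) *\<^sub>R (u/A) + t *\<^sub>R (v/B) = A/(A+B)*(u/A) + B/(A+B)*(v/B)" using t(3) by (simp add: t_def)
        also have "\<dots> = u/(A+B) + v/(A+B)" using A B by simp
        also have "\<dots> = (u+v)/(A+B)" by (simp add: add_divide_distrib)
        finally show ?thesis .
      qed
      ultimately have "(u+v) powr p / (A+B) powr p \<le> A/(A+B) * (u powr p / A powr p) + B/(A+B) * (v powr p / B powr p)"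
        using u v A B t(3) by (simp add: powr_divide t_def)
      then have "(u+v) powr p \<le> (A+B) powr p * (A/(A+B) * (u powr p / A powr p) + B/(A+B) * (v powr p / B powr p))"
        using A B by (simp add: divide_le_eq mult.commute)
      also have "\<dots> = (A+B) powr (p-1) * (u powr p / A powr (p-1) + v powr p / B powr (p-1))"
      proof -
        have alg: "s'*(a+b)*(a/(a+b)*(U/(a'*a)) + b/(a+b)*(V/(b'*b))) = s'*(U/a' + V/b')"
          if "a>0" "b>0" "a'>0" "b'>0" for a b a' b' s' U V :: real
        proof -
          have "a+b \<noteq> 0" "a \<noteq> 0" "b \<noteq> 0" "a' \<noteq> 0" "b' \<noteq> 0" using that by auto
          then have e1: "(a+b)*(a/(a+b)) = a" "(a+b)*(b/(a+b)) = b" "a*(U/(a'*a)) = U/a'" "b*(V/(b'*b)) = V/b'"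
            by simp_all
          have "s'*(a+b)*(a/(a+b)*(U/(a'*a)) + b/(a+b)*(V/(b'*b)))
              = s'*(((a+b)*(a/(a+b)))*(U/(a'*a)) + ((a+b)*(b/(a+b)))*(V/(b'*b)))"
            by (simp only: algebra_simps)
          also have "\<dots> = s'*(a*(U/(a'*a)) + b*(V/(b'*b)))" by (simp only: e1(1,2))
          also have "\<dots> = s'*(U/a' + V/b')" by (simp only: e1(3,4))
          finally show ?thesis .
        qed
        show ?thesis unfolding eA eB eS using alg[OF A B pA(1,2)] by simp
      qed
      finally show ?thesis .
    qed
  qed
qed

lemma glue:
  fixes P1 :: "('a \<times> 'b) pmf" and P2 :: "('b \<times> 'c) pmf"
  assumes m: "map_pmf snd P1 = map_pmf fst P2"
  obtains T :: "('a \<times> 'b \<times> 'c) pmf"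
  where "map_pmf (\<lambda>t. (fst t, fst (snd t))) T = P1" "map_pmf snd T = P2"
proof -
  define C where "C y = cond_pmf P2 {q. fst q = y}" for y
  define T where "T = bind_pmf P1 (\<lambda>q. map_pmf (\<lambda>r. (fst q, r)) (C (snd q)))"
  have ne: "set_pmf P2 \<inter> {q. fst q = y} \<noteq> {}" if "y \<in> set_pmf (map_pmf fst P2)" for y
    using that by (auto simp: set_map_pmf)
  have sC: "set_pmf (C y) = set_pmf P2 \<inter> {q. fst q = y}" if "y \<in> set_pmf (map_pmf fst P2)" for y
    unfolding C_def using set_cond_pmf[OF ne[OF that]] .
  have "map_pmf (\<lambda>t. (fst t, fst (snd t))) T = bind_pmf P1 (\<lambda>q. map_pmf (\<lambda>r. (fst q, fst r)) (C (snd q)))"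
    unfolding T_def by (simp add: map_bind_pmf map_pmf_comp o_def)
  also have "\<dots> = bind_pmf P1 return_pmf"
  proof (rule bind_pmf_cong[OF refl])
    fix q assume q: "q \<in> set_pmf P1"
    then have y: "snd q \<in> set_pmf (map_pmf fst P2)" using m[symmetric] by (auto simp: set_map_pmf)
    have "map_pmf (\<lambda>r. (fst q, fst r)) (C (snd q)) = map_pmf (\<lambda>r. q) (C (snd q))"
      by (rule map_pmf_cong[OF refl]) (use sC[OF y] in auto)
    then show "map_pmf (\<lambda>r. (fst q, fst r)) (C (snd q)) = return_pmf q" by (simp add: map_pmf_const)
  qed
  also have "\<dots> = P1" by (simp add: bind_return_pmf')
  finally have 1: "map_pmf (\<lambda>t. (fst t, fst (snd t))) T = P1" .
  have "map_pmf snd T = bind_pmf P1 (\<lambda>q. C (snd q))"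
    unfolding T_def by (simp add: map_bind_pmf map_pmf_comp o_def)
  also have "\<dots> = bind_pmf (map_pmf snd P1) C" by (simp add: bind_map_pmf)
  also have "\<dots> = bind_pmf (map_pmf fst P2) (\<lambda>y. cond_pmf P2 {q. fst q = y})" unfolding m C_def ..
  also have "\<dots> = P2"
    by (rule bind_cond_pmf_cancel) (auto simp: set_map_pmf measure_map_pmf vimage_def)
  finally have 2: "map_pmf snd T = P2" .
  show ?thesis using that 1 2 by blast
qed


context
  fixes L :: nat and ds :: "nat \<Rightarrow> nat" and p :: real and d :: "real list \<Rightarrow> real list \<Rightarrow> real"
  assumes p1: "p \<ge> 1" and L1: "L \<ge> 1"
    and dist: "\<And>l. l < L \<Longrightarrow> is_distance_on {v. length v = ds l} d"
begin

lemma dm_fin: "\<mu> \<in> discrete_measures L ds \<Longrightarrow> finite (set_pmf \<mu>)"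
  unfolding discrete_measures_def by auto

lemma dm_len: "\<mu> \<in> discrete_measures L ds \<Longrightarrow> x \<in> set_pmf \<mu> \<Longrightarrow> l < L \<Longrightarrow> length (x l) = ds l"
  unfolding discrete_measures_def grouped_points_def by auto

lemma dm_nil: "\<mu> \<in> discrete_measures L ds \<Longrightarrow> x \<in> set_pmf \<mu> \<Longrightarrow> l \<ge> L \<Longrightarrow> x l = []"
  unfolding discrete_measures_def grouped_points_def by auto

lemma d_nonneg: "l < L \<Longrightarrow> length a = ds l \<Longrightarrow> length b = ds l \<Longrightarrow> d a b \<ge> 0"
  using dist unfolding is_distance_on_def by auto
lemma d_sym: "l < L \<Longrightarrow> length a = ds l \<Longrightarrow> length b = ds l \<Longrightarrow> d a b = d b a"
  using dist unfolding is_distance_on_def by auto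
lemma d_zero: "l < L \<Longrightarrow> length a = ds l \<Longrightarrow> length b = ds l \<Longrightarrow> d a b = 0 \<longleftrightarrow> a = b"
  using dist unfolding is_distance_on_def by auto
lemma d_tri: "l < L \<Longrightarrow> length a = ds l \<Longrightarrow> length b = ds l \<Longrightarrow> length c = ds l \<Longrightarrow> d a c \<le> d a b + d b c"
  using dist unfolding is_distance_on_def by auto

lemma plan_fin: "\<mu> \<in> discrete_measures L ds \<Longrightarrow> \<nu> \<in> discrete_measures L ds \<Longrightarrow>
   P \<in> transport_plans \<mu> \<nu> \<Longrightarrow> finite (set_pmf P)"
  using plans_finite dm_fin by blast

lemma plan_len:
  assumes "\<mu> \<in> discrete_measures L ds" "\<nu> \<in> discrete_measures L ds" "P \<in> transport_plans \<mu> \<nu>"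
    "q \<in> set_pmf P" "l < L"
  shows "length (fst q l) = ds l" "length (snd q l) = ds l"
  using plans_supp[OF assms(3)] assms dm_len by (auto simp: mem_Times_iff)

lemma F_basic:
  assumes "\<mu> \<in> discrete_measures L ds" "\<nu> \<in> discrete_measures L ds"
  shows "transport_plans \<mu> \<nu> \<noteq> {}" "bdd_below (GG L d p ` transport_plans \<mu> \<nu>)"
    "FF L d p \<mu> \<nu> \<ge> 0" "\<And>P. P \<in> transport_plans \<mu> \<nu> \<Longrightarrow> FF L d p \<mu> \<nu> \<le> GG L d p P"
proof -
  show ne: "transport_plans \<mu> \<nu> \<noteq> {}" using plans_ne by blast
  have g0: "\<And>P. P \<in> transport_plans \<mu> \<nu> \<Longrightarrow> GG L d p P \<ge> 0"
    using G_nonneg plan_fin[OF assms] L1 by blast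
  then show bb: "bdd_below (GG L d p ` transport_plans \<mu> \<nu>)" by (intro bdd_belowI2) auto
  show "FF L d p \<mu> \<nu> \<ge> 0" unfolding FF_def by (rule cINF_greatest[OF ne g0])
  show "\<And>P. P \<in> transport_plans \<mu> \<nu> \<Longrightarrow> FF L d p \<mu> \<nu> \<le> GG L d p P"
    unfolding FF_def by (rule cINF_lower[OF bb])
qed

lemma F_self:
  assumes "\<mu> \<in> discrete_measures L ds"
  shows "FF L d p \<mu> \<mu> = 0"
proof -
  define P0 where "P0 = map_pmf (\<lambda>x. (x, x)) \<mu>"
  have P0: "P0 \<in> transport_plans \<mu> \<mu>"
    unfolding P0_def transport_plans_def by (simp add: map_pmf_comp)
  have "cst d p l P0 \<le> 0" if l: "l < L" for l
  proof -
    have "AE x in measure_pmf \<mu>. d (x l) (x l) powr p = 0"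
      unfolding AE_measure_pmf_iff using d_zero[OF l] dm_len[OF assms _ l] p1 by auto
    then have "(\<integral>x. d (x l) (x l) powr p \<partial>measure_pmf \<mu>) = (\<integral>x. 0 \<partial>measure_pmf \<mu>)"
      by (intro integral_cong_AE) auto
    then show ?thesis unfolding cst_def P0_def by simp
  qed
  then have "GG L d p P0 \<le> 0"
    using G_le plan_fin[OF assms assms P0] L1 by blast
  then show ?thesis using F_basic[OF assms assms] P0 by (meson order.antisym order.trans)
qed

lemma swap_plan: "P \<in> transport_plans \<mu> \<nu> \<Longrightarrow> map_pmf prod.swap P \<in> transport_plans \<nu> \<mu>"
  unfolding transport_plans_def by (auto simp: map_pmf_comp o_def)

lemma G_swap:
  assumes "\<mu> \<in> discrete_measures L ds" "\<nu> \<in> discrete_measures L ds" "P \<in> transport_plans \<mu> \<nu>"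
  shows "GG L d p (map_pmf prod.swap P) = GG L d p P"
proof -
  have fin: "finite (set_pmf P)" using plan_fin[OF assms] .
  then have fin2: "finite (set_pmf (map_pmf prod.swap P))" by (simp add: set_map_pmf)
  have c: "cst d p l (map_pmf prod.swap P) = cst d p l P" if l: "l < L" for l
  proof -
    have "AE q in measure_pmf P. d (snd q l) (fst q l) powr p = d (fst q l) (snd q l) powr p"
      unfolding AE_measure_pmf_iff using d_sym[OF l] plan_len[OF assms _ l] by auto
    then have "(\<integral>q. d (snd q l) (fst q l) powr p \<partial>measure_pmf P) = (\<integral>q. d (fst q l) (snd q l) powr p \<partial>measure_pmf P)"
      by (intro integral_cong_AE) auto
    then show ?thesis unfolding cst_def by simp
  qed
  have "frwd_cost L d p (map_pmf prod.swap P) \<alpha> = frwd_cost L d p P \<alpha>" for \<alpha>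
    unfolding cost_eq[OF fin] cost_eq[OF fin2] using c by (intro sum.cong) auto
  then show ?thesis unfolding GG_def by simp
qed

lemma F_sym_le:
  assumes "\<mu> \<in> discrete_measures L ds" "\<nu> \<in> discrete_measures L ds"
  shows "FF L d p \<nu> \<mu> \<le> FF L d p \<mu> \<nu>"
  unfolding FF_def[of L d p \<mu> \<nu>]
proof (rule cINF_greatest[OF F_basic(1)[OF assms]])
  fix P assume P: "P \<in> transport_plans \<mu> \<nu>"
  have "FF L d p \<nu> \<mu> \<le> GG L d p (map_pmf prod.swap P)"
    using F_basic(4)[OF assms(2,1) swap_plan[OF P]] .
  then show "FF L d p \<nu> \<mu> \<le> GG L d p P" using G_swap[OF assms P] by simp
qed

lemma F_sym:
  assumes "\<mu> \<in> discrete_measures L ds" "\<nu> \<in> discrete_measures L ds"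
  shows "FF L d p \<nu> \<mu> = FF L d p \<mu> \<nu>"
  using F_sym_le[OF assms] F_sym_le[OF assms(2,1)] by simp


lemma F_zero_le:
  assumes mu: "\<mu> \<in> discrete_measures L ds" and nu: "\<nu> \<in> discrete_measures L ds"
    and F0: "FF L d p \<mu> \<nu> = 0"
  shows "pmf \<mu> a \<le> pmf \<nu> a"
proof -
  define Bad where "Bad = {q \<in> set_pmf \<mu> \<times> set_pmf \<nu>. fst q \<noteq> snd q}"
  define h where "h q = (\<Sum>l<L. d (fst q l) (snd q l) powr p)" for q
  have finBad: "finite Bad" unfolding Bad_def using dm_fin[OF mu] dm_fin[OF nu] by auto
  have hpos: "h q > 0" if q: "q \<in> Bad" for q
  proof -
    have x: "fst q \<in> set_pmf \<mu>" and y: "snd q \<in> set_pmf \<nu>" and ne: "fst q \<noteq> snd q"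
      using q by (auto simp: Bad_def)
    have "\<exists>l<L. fst q l \<noteq> snd q l"
    proof (rule ccontr)
      assume "\<not> ?thesis"
      then have "fst q l = snd q l" for l
        using dm_nil[OF mu x] dm_nil[OF nu y] by (cases "l < L") auto
      then show False using ne by auto
    qed
    then obtain l where l: "l < L" "fst q l \<noteq> snd q l" by blast
    have "d (fst q l) (snd q l) \<noteq> 0" using d_zero[OF l(1) dm_len[OF mu x l(1)] dm_len[OF nu y l(1)]] l by simp
    then have "0 < d (fst q l) (snd q l) powr p" by simp
    also have "\<dots> \<le> h q" unfolding h_def by (rule member_le_sum) (use l in auto)
    finally show ?thesis .
  qed
  have hnn: "h q \<ge> 0" for q unfolding h_def by (intro sum_nonneg) auto
  define \<delta> where "\<delta> = Min (insert 1 (h ` Bad))"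
  have \<delta>pos: "\<delta> > 0" unfolding \<delta>_def using finBad hpos by (subst Min_gr_iff) auto
  have \<delta>le: "\<delta> \<le> h q" if "q \<in> Bad" for q unfolding \<delta>_def using finBad that by (intro Min_le) auto
  have key: "\<delta> * (pmf \<mu> a - pmf \<nu> a) / real L \<le> GG L d p P" if P: "P \<in> transport_plans \<mu> \<nu>" for P
  proof -
    have fin: "finite (set_pmf P)" using plan_fin[OF mu nu P] .
    have pm: "pmf \<mu> a = measure P (fst -` {a})" "pmf \<nu> a = measure P (snd -` {a})"
      using P unfolding transport_plans_def by (auto simp: pmf_map)
    have "measure P (fst -` {a}) = measure P (fst -` {a} \<inter> set_pmf P)"
      by (simp add: measure_Int_set_pmf)
    also have "\<dots> \<le> measure P (snd -` {a} \<union> Bad)"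
      using plans_supp[OF P] by (intro measure_pmf.finite_measure_mono) (auto simp: Bad_def)
    also have "\<dots> \<le> measure P (snd -` {a}) + measure P Bad"
      by (rule measure_subadditive) (auto simp: measure_pmf.emeasure_eq_measure)
    finally have m1: "pmf \<mu> a - pmf \<nu> a \<le> measure P Bad" using pm by simp
    have "(\<integral>q. \<delta> * indicator Bad q \<partial>measure_pmf P) \<le> (\<integral>q. h q \<partial>measure_pmf P)"
      using integrable_measure_pmf_finite[OF fin]
      by (intro integral_mono) (auto simp: indicator_def \<delta>le hnn)
    moreover have "(\<integral>q. \<delta> * indicator Bad q \<partial>measure_pmf P) = \<delta> * measure P Bad" by simp
    moreover have "(\<integral>q. h q \<partial>measure_pmf P) = (\<Sum>l<L. cst d p l P)"
      unfolding h_def cst_def by (rule Bochner_Integration.integral_sum) (rule integrable_measure_pmf_finite[OF fin])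
    moreover have "(\<Sum>l<L. cst d p l P) \<le> (\<Sum>l<L. GG L d p P)"
      using G_ge[OF fin] by (intro sum_mono) auto
    ultimately have "\<delta> * measure P Bad \<le> real L * GG L d p P" by simp
    moreover have "\<delta> * (pmf \<mu> a - pmf \<nu> a) \<le> \<delta> * measure P Bad"
      using m1 \<delta>pos by (intro mult_left_mono) auto
    ultimately have "\<delta> * (pmf \<mu> a - pmf \<nu> a) \<le> real L * GG L d p P" by linarith
    then show ?thesis using L1 by (simp add: divide_le_eq mult.commute)
  qed
  have "\<delta> * (pmf \<mu> a - pmf \<nu> a) / real L \<le> FF L d p \<mu> \<nu>"
    unfolding FF_def by (rule cINF_greatest[OF F_basic(1)[OF mu nu] key])
  then have "\<delta> * (pmf \<mu> a - pmf \<nu> a) \<le> 0" using F0 L1 by (simp add: divide_le_eq)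
  then show ?thesis using \<delta>pos by (simp add: mult_le_0_iff)
qed

lemma F_zero:
  assumes mu: "\<mu> \<in> discrete_measures L ds" and nu: "\<nu> \<in> discrete_measures L ds"
    and F0: "FF L d p \<mu> \<nu> = 0"
  shows "\<mu> = \<nu>"
proof (rule pmf_eqI)
  fix a
  have "FF L d p \<nu> \<mu> = 0" using F_sym[OF mu nu] F0 by simp
  then show "pmf \<mu> a = pmf \<nu> a" using F_zero_le[OF mu nu F0] F_zero_le[OF nu mu] by (meson order.antisym)
qed


lemma F_tri_core:
  assumes mu: "\<mu> \<in> discrete_measures L ds" and nu: "\<nu> \<in> discrete_measures L ds"
    and eta: "\<eta> \<in> discrete_measures L ds"
    and A: "A > 0" and B: "B > 0"
    and F1: "FF L d p \<mu> \<nu> < A powr p" and F2: "FF L d p \<nu> \<eta> < B powr p"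
  shows "FF L d p \<mu> \<eta> \<le> (A+B) powr p"
proof -
  obtain P1 where P1: "P1 \<in> transport_plans \<mu> \<nu>" "GG L d p P1 < A powr p"
    using F1 cINF_less_iff[OF F_basic(1,2)[OF mu nu]] unfolding FF_def by blast
  obtain P2 where P2: "P2 \<in> transport_plans \<nu> \<eta>" "GG L d p P2 < B powr p"
    using F2 cINF_less_iff[OF F_basic(1,2)[OF nu eta]] unfolding FF_def by blast
  have fin1: "finite (set_pmf P1)" using plan_fin[OF mu nu P1(1)] .
  have fin2: "finite (set_pmf P2)" using plan_fin[OF nu eta P2(1)] .
  have m: "map_pmf snd P1 = map_pmf fst P2" using P1 P2 by (simp add: transport_plans_def)
  obtain T where T1: "map_pmf (\<lambda>t. (fst t, fst (snd t))) T = P1" and T2: "map_pmf snd T = P2"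
    using glue[OF m] by blast
  define Q where "Q = map_pmf (\<lambda>t. (fst t, snd (snd t))) T"
  have Q: "Q \<in> transport_plans \<mu> \<eta>"
  proof -
    have "map_pmf fst Q = map_pmf fst P1" unfolding Q_def T1[symmetric] by (simp add: map_pmf_comp)
    moreover have "map_pmf snd Q = map_pmf snd P2" unfolding Q_def T2[symmetric] by (simp add: map_pmf_comp)
    ultimately show ?thesis using P1(1) P2(1) by (simp add: transport_plans_def)
  qed
  have suppT: "(fst t, fst (snd t)) \<in> set_pmf P1 \<and> snd t \<in> set_pmf P2" if t: "t \<in> set_pmf T" for t
  proof -
    have "(fst t, fst (snd t)) \<in> set_pmf (map_pmf (\<lambda>t. (fst t, fst (snd t))) T)" "snd t \<in> set_pmf (map_pmf snd T)"
      using t by (auto simp: set_map_pmf)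
    then show ?thesis using T1 T2 by simp
  qed
  have "set_pmf T \<subseteq> set_pmf \<mu> \<times> set_pmf \<nu> \<times> set_pmf \<eta>"
  proof
    fix t assume t: "t \<in> set_pmf T"
    then have "(fst t, fst (snd t)) \<in> set_pmf \<mu> \<times> set_pmf \<nu>" "snd t \<in> set_pmf \<nu> \<times> set_pmf \<eta>"
      using suppT plans_supp[OF P1(1)] plans_supp[OF P2(1)] by blast+
    then show "t \<in> set_pmf \<mu> \<times> set_pmf \<nu> \<times> set_pmf \<eta>" by (cases t) auto
  qed
  then have finT: "finite (set_pmf T)"
    using dm_fin[OF mu] dm_fin[OF nu] dm_fin[OF eta] by (meson finite_SigmaI finite_subset)
  have intT: "integrable (measure_pmf T) f" for f :: "_ \<Rightarrow> real" by (rule integrable_measure_pmf_finite[OF finT])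
  define C where "C = (A+B) powr (p-1)"
  have Cpos: "C > 0" using A B by (simp add: C_def)
  have cl: "cst d p l Q \<le> (A+B) powr p" if l: "l < L" for l
  proof -
    define u :: "(nat \<Rightarrow> real list) \<times> (nat \<Rightarrow> real list) \<times> (nat \<Rightarrow> real list) \<Rightarrow> real" where "u t = d (fst t l) (fst (snd t) l)" for t
    define v :: "(nat \<Rightarrow> real list) \<times> (nat \<Rightarrow> real list) \<times> (nat \<Rightarrow> real list) \<Rightarrow> real" where "v t = d (fst (snd t) l) (snd (snd t) l)" for t
    define w :: "(nat \<Rightarrow> real list) \<times> (nat \<Rightarrow> real list) \<times> (nat \<Rightarrow> real list) \<Rightarrow> real" where "w t = d (fst t l) (snd (snd t) l)" for t
    have c1: "cst d p l P1 = (\<integral>t. u t powr p \<partial>measure_pmf T)" unfolding T1[symmetric] cst_def u_def by simp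
    have c2: "cst d p l P2 = (\<integral>t. v t powr p \<partial>measure_pmf T)" unfolding T2[symmetric] cst_def v_def by simp
    have cQ: "cst d p l Q = (\<integral>t. w t powr p \<partial>measure_pmf T)" unfolding Q_def cst_def w_def by simp
    have pt: "w t powr p \<le> C * (u t powr p / A powr (p-1) + v t powr p / B powr (p-1))"
      if t: "t \<in> set_pmf T" for t
    proof -
      have l1: "length (fst t l) = ds l" "length (fst (snd t) l) = ds l" 
        using plan_len[OF mu nu P1(1) _ l] suppT[OF t] by auto
      have l2: "length (snd (snd t) l) = ds l"
        using plan_len[OF nu eta P2(1) _ l] suppT[OF t] by auto
      have "w t \<le> u t + v t" unfolding u_def v_def w_def using d_tri[OF l l1 l2] .
      moreover have "0 \<le> w t" "0 \<le> u t" "0 \<le> v t"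
        unfolding u_def v_def w_def using d_nonneg[OF l] l1 l2 by auto
      ultimately have "w t powr p \<le> (u t + v t) powr p" using p1 by (intro powr_mono2) auto
      also have "\<dots> \<le> C * (u t powr p / A powr (p-1) + v t powr p / B powr (p-1))"
        unfolding C_def using mink_pt[OF \<open>0 \<le> u t\<close> \<open>0 \<le> v t\<close> A B p1] .
      finally show ?thesis .
    qed
    have "(\<integral>t. w t powr p \<partial>measure_pmf T)
        \<le> (\<integral>t. C * (u t powr p / A powr (p-1) + v t powr p / B powr (p-1)) \<partial>measure_pmf T)"
      by (rule integral_mono_AE[OF intT intT]) (auto simp: AE_measure_pmf_iff pt)
    also have "\<dots> = C * (cst d p l P1 / A powr (p-1) + cst d p l P2 / B powr (p-1))"
      unfolding c1 c2 using intT by simp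
    also have "\<dots> \<le> C * (A powr p / A powr (p-1) + B powr p / B powr (p-1))"
    proof -
      have "cst d p l P1 \<le> A powr p" using G_ge[OF fin1 l, of d p] P1(2) by simp
      moreover have "cst d p l P2 \<le> B powr p" using G_ge[OF fin2 l, of d p] P2(2) by simp
      ultimately show ?thesis using Cpos A B
        by (intro mult_left_mono add_mono divide_right_mono) auto
    qed
    also have "\<dots> = C * (A + B)"
      using A B by (simp add: powr_diff[symmetric])
    also have "\<dots> = (A+B) powr p"
      unfolding C_def using powr_add[of "A+B" "p-1" 1] A B by simp
    finally show ?thesis using cQ by simp
  qed
  have finQ: "finite (set_pmf Q)" using plan_fin[OF mu eta Q] .
  have "GG L d p Q \<le> (A+B) powr p" using G_le[OF finQ L1 cl] .
  then show ?thesis using F_basic(4)[OF mu eta Q] by simp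
qed

lemma FRWD_eq: "FRWD L d p \<mu> \<nu> = FF L d p \<mu> \<nu> powr (1/p)"
  unfolding FRWD_def FF_def GG_def ..

lemma F_tri:
  assumes mu: "\<mu> \<in> discrete_measures L ds" and nu: "\<nu> \<in> discrete_measures L ds"
    and eta: "\<eta> \<in> discrete_measures L ds"
  shows "FRWD L d p \<mu> \<eta> \<le> FRWD L d p \<mu> \<nu> + FRWD L d p \<nu> \<eta>"
proof (rule field_le_epsilon)
  fix e :: real assume e: "e > 0"
  define a where "a = FF L d p \<mu> \<nu> powr (1/p)"
  define b where "b = FF L d p \<nu> \<eta> powr (1/p)"
  have p0: "p > 0" using p1 by simp
  have a0: "a \<ge> 0" "b \<ge> 0" unfolding a_def b_def by auto
  have Fa: "FF L d p \<mu> \<nu> = a powr p" unfolding a_def using F_basic(3)[OF mu nu] p0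
    by (simp add: powr_powr)
  have Fb: "FF L d p \<nu> \<eta> = b powr p" unfolding b_def using F_basic(3)[OF nu eta] p0
    by (simp add: powr_powr)
  have "FF L d p \<mu> \<nu> < (a + e/2) powr p" unfolding Fa using a0 e p0 by (intro powr_less_mono2) auto
  moreover have "FF L d p \<nu> \<eta> < (b + e/2) powr p" unfolding Fb using a0 e p0 by (intro powr_less_mono2) auto
  ultimately have "FF L d p \<mu> \<eta> \<le> ((a + e/2) + (b + e/2)) powr p"
    using a0 e by (intro F_tri_core[OF mu nu eta]) auto
  then have "FF L d p \<mu> \<eta> powr (1/p) \<le> (((a + e/2) + (b + e/2)) powr p) powr (1/p)"
    using F_basic(3)[OF mu eta] p0 by (intro powr_mono2) auto
  also have "\<dots> = a + b + e" using a0 e p0 by (simp add: powr_powr)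
  finally show "FRWD L d p \<mu> \<eta> \<le> FRWD L d p \<mu> \<nu> + FRWD L d p \<nu> \<eta> + e"
    unfolding FRWD_eq a_def b_def .
qed

end

theorem proposition1:
  fixes L :: nat and ds :: "nat \<Rightarrow> nat" and p :: real
    and d :: "real list \<Rightarrow> real list \<Rightarrow> real"
  assumes "p \<ge> 1"
    and "L \<ge> 1"
    and "\<And>l. l < L \<Longrightarrow> is_distance_on {v. length v = ds l} d"
  shows "is_distance_on (discrete_measures L ds) (FRWD L d p)"
proof -
  have FE: "FRWD L d p a b = FF L d p a b powr (1/p)" for a b
    unfolding FRWD_def FF_def GG_def ..
  show ?thesis
  unfolding is_distance_on_def
proof (intro conjI ballI)
  fix x y z assume x: "x \<in> discrete_measures L ds" and y: "y \<in> discrete_measures L ds"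
    and z: "z \<in> discrete_measures L ds"
  show "FRWD L d p x z \<le> FRWD L d p x y + FRWD L d p y z"
    by (rule F_tri[OF assms x y z])
next
  fix x y assume x: "x \<in> discrete_measures L ds" and y: "y \<in> discrete_measures L ds"
  show "FRWD L d p x y \<ge> 0" using FE[of x y] by simp
  show "FRWD L d p x y = FRWD L d p y x" unfolding FE using F_sym[OF assms x y] by simp
  show "FRWD L d p x y = 0 \<longleftrightarrow> x = y"
  proof
    assume "FRWD L d p x y = 0"
    then have "FF L d p x y = 0" unfolding FE by simp
    then show "x = y" using F_zero[OF assms x y] by simp
  next
    assume "x = y"
    then show "FRWD L d p x y = 0" unfolding FE using F_self[OF assms x] by simp
  qed
qed

qed

end
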